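(* Under the setting below, assume in addition $0<\underline h\le h_{\rm in}\le\overline h<\infty$ and $0\le A_{\rm in}\le 1$, and set $K:=|\overline f|+|\underline f|$. Then $h_m\ge0$ on $\Omega\times[0,T]$. Moreover, for every $t\in[0,T]$ with $$t\le \frac{\underline h}{6K}\qquad\text{and}\qquad \exp\Big(\int_0^t\|\operatorname{div}\vec u^o(s)\|_{L^\infty(\Omega)}\,ds\Big)\le 2,$$ one has $\tfrac14\underline h\le h_m(\cdot,t)\le 4\overline h$ on $\Omega$; and for every $t\in[0,T]$ with $t\le \int_\Omega h_{\rm in}\,dx\big/\big(6K|\Omega|\big)$ one has $$\tfrac12\int_\Omega h_{\rm in}\,dx\le\int_\Omega h_m(x,t)\,dx\le 2\int_\Omega h_{\rm in}\,dx.$$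
   Context: Setting: $\Omega=\mathbb T^2$, $\omega,\nu\in(0,1)$, $T>0$, $\vec u^o:\Omega\times[0,T]\to\mathbb R^2$ a given smooth velocity field, and $(h_m,A_m)$ a sufficiently regular (e.g. classical) solution on $[0,T]$ of $$\partial_t h_m+\operatorname{div}(h_m\vec u^o)=\mathcal S_{h_m,\omega,\nu},\qquad \partial_tA_m+\operatorname{div}(A_m\vec u^o)=\mathcal S_{A_m,\omega,\nu}+A_m\operatorname{div}\vec u^o\cdot\chi^\omega_{A_m},$$ with $h_m(0)=h_{\rm in}$, $A_m(0)=A_{\rm in}$. Here $\psi^+=\max\{\psi,0\}$, $f:\mathbb R\to\mathbb R$ is smooth with $\underline f\le f\le\overline f$, $h_0>0$, and for functions $h,A$: $\chi^\nu_h=h^+/(h^++\nu)$, $\mathcal S_{h,\omega,\nu}=[f(h^+/(A^++\omega))A+(1-A)f(0)]\chi^\nu_h$, $\mathcal S_{A,\omega,\nu}=\frac{(f(0))^+}{h_0+\nu}(1-A)-\frac{A}{2h^++\nu}\cdot\frac{\sqrt{|\mathcal S_{h,\omega,\nu}|^2+\omega^2}-\mathcal S_{h,\omega,\nu}}{2}$, $\chi^\omega_A=1-\frac{(1-A)^+}{(1-A)^++\omega}$, evaluated at $(h_m,A_m)$. *)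

theory Defs
  imports "HOL-Analysis.Analysis"
begin

text \<open>Points of space-time: ((x1,x2),t).  The torus T^2 = R^2/Z^2 is represented by
  functions on R^2 that are 1-periodic in each coordinate; Omega is identified with the
  fundamental cell [0,1]^2.\<close>

type_synonym pt3 = "(real \<times> real) \<times> real"

definition pos :: "real \<Rightarrow> real" where
  "pos \<psi> = max \<psi> 0"

definition pdiff :: "nat \<Rightarrow> (pt3 \<Rightarrow> real) \<Rightarrow> pt3 \<Rightarrow> real" where
  "pdiff i g z =
     (if i = 0 then deriv (\<lambda>s. g ((s, snd (fst z)), snd z)) (fst (fst z))
      else if i = 1 then deriv (\<lambda>s. g ((fst (fst z), s), snd z)) (snd (fst z))
      else deriv (\<lambda>s. g (fst z, s)) (snd z))"

abbreviation dx1 where "dx1 \<equiv> pdiff 0"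
abbreviation dx2 where "dx2 \<equiv> pdiff 1"
abbreviation dt where "dt \<equiv> pdiff 2"

definition smooth3 :: "(pt3 \<Rightarrow> real) \<Rightarrow> bool" where
  "smooth3 g \<longleftrightarrow> (\<forall>is z. fold pdiff is g differentiable (at z))"

definition C1_3 :: "(pt3 \<Rightarrow> real) \<Rightarrow> bool" where
  "C1_3 g \<longleftrightarrow> (\<forall>z. g differentiable (at z)) \<and> (\<forall>i<3. continuous_on UNIV (pdiff i g))"

definition smooth_real :: "(real \<Rightarrow> real) \<Rightarrow> bool" where
  "smooth_real f \<longleftrightarrow> (\<forall>n x. (deriv ^^ n) f differentiable (at x))"

definition periodic_x :: "(pt3 \<Rightarrow> 'a) \<Rightarrow> bool" where
  "periodic_x g \<longleftrightarrow> (\<forall>a b t. g ((a + 1, b), t) = g ((a, b), t) \<and> g ((a, b + 1), t) = g ((a, b), t))"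

definition divu :: "(pt3 \<Rightarrow> real \<times> real) \<Rightarrow> pt3 \<Rightarrow> real" where
  "divu u z = dx1 (\<lambda>w. fst (u w)) z + dx2 (\<lambda>w. snd (u w)) z"

definition divflux :: "(pt3 \<Rightarrow> real) \<Rightarrow> (pt3 \<Rightarrow> real \<times> real) \<Rightarrow> pt3 \<Rightarrow> real" where
  "divflux g u z = dx1 (\<lambda>w. g w * fst (u w)) z + dx2 (\<lambda>w. g w * snd (u w)) z"

definition chi_h :: "real \<Rightarrow> real \<Rightarrow> real" where
  "chi_h \<nu> h = pos h / (pos h + \<nu>)"

definition S_h :: "(real \<Rightarrow> real) \<Rightarrow> real \<Rightarrow> real \<Rightarrow> real \<Rightarrow> real \<Rightarrow> real" where
  "S_h f \<omega> \<nu> h A = (f (pos h / (pos A + \<omega>)) * A + (1 - A) * f 0) * chi_h \<nu> h"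

definition S_A :: "(real \<Rightarrow> real) \<Rightarrow> real \<Rightarrow> real \<Rightarrow> real \<Rightarrow> real \<Rightarrow> real \<Rightarrow> real" where
  "S_A f \<omega> \<nu> h0 h A =
     pos (f 0) / (h0 + \<nu>) * (1 - A)
     - A / (2 * pos h + \<nu>) * ((sqrt ((S_h f \<omega> \<nu> h A)\<^sup>2 + \<omega>\<^sup>2) - S_h f \<omega> \<nu> h A) / 2)"

definition chi_A :: "real \<Rightarrow> real \<Rightarrow> real" where
  "chi_A \<omega> A = 1 - pos (1 - A) / (pos (1 - A) + \<omega>)"

definition Omega :: "(real \<times> real) set" where
  "Omega = cbox (0, 0) (1, 1)"

definition Linf_divu :: "(pt3 \<Rightarrow> real \<times> real) \<Rightarrow> real \<Rightarrow> real" where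
  "Linf_divu u s = (SUP x\<in>Omega. \<bar>divu u (x, s)\<bar>)"

end

theory Submission
  imports Defs
begin


lemma slice1:
  assumes "g differentiable (at ((a,b),t))"
  shows "((\<lambda>s. g((s,b),t)) has_real_derivative dx1 g ((a,b),t)) (at a)"
proof -
  have "(\<lambda>s. g((s,b),t)) differentiable (at a)"
    by (rule differentiable_compose[of g, OF _ ]) (use assms in auto)
  then show ?thesis unfolding pdiff_def by (simp add: DERIV_deriv_iff_real_differentiable)
qed

lemma slice2:
  assumes "g differentiable (at ((a,b),t))"
  shows "((\<lambda>s. g((a,s),t)) has_real_derivative dx2 g ((a,b),t)) (at b)"
proof -
  have "(\<lambda>s. g((a,s),t)) differentiable (at b)"
    by (rule differentiable_compose[of g, OF _ ]) (use assms in auto)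
  then show ?thesis unfolding pdiff_def by (simp add: DERIV_deriv_iff_real_differentiable)
qed

lemma slicet:
  assumes "g differentiable (at (x,t))"
  shows "((\<lambda>s. g(x,s)) has_real_derivative dt g (x,t)) (at t)"
proof -
  have "(\<lambda>s. g(x,s)) differentiable (at t)"
    by (rule differentiable_compose[of g, OF _ ]) (use assms in auto)
  then show ?thesis unfolding pdiff_def by (simp add: DERIV_deriv_iff_real_differentiable)
qed

lemma per_nat:
  assumes "periodic_x g"
  shows "g((a + real n, b), t) = g((a,b),t) \<and> g((a, b + real n), t) = g((a,b),t)"
proof (induction n)
  case 0 then show ?case by simp
next
  case (Suc n)
  have "g((a + real (Suc n), b), t) = g(((a + real n) + 1, b), t)" by (simp add: algebra_simps)
  also have "\<dots> = g((a + real n, b), t)" using assms unfolding periodic_x_def by blast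
  finally have 1: "g((a + real (Suc n), b), t) = g((a,b),t)" using Suc by simp
  have "g((a, b + real (Suc n)), t) = g((a, (b + real n) + 1), t)" by (simp add: algebra_simps)
  also have "\<dots> = g((a, b + real n), t)" using assms unfolding periodic_x_def by blast
  finally show ?case using Suc 1 by simp
qed

lemma per_int:
  assumes "periodic_x g"
  shows "g((a + of_int k, b), t) = g((a,b),t) \<and> g((a, b + of_int k), t) = g((a,b),t)"
proof (cases "k \<ge> 0")
  case True
  then obtain n where "k = int n" by (metis nonneg_eq_int)
  then show ?thesis using per_nat[OF assms] by simp
next
  case False
  define n where "n = nat (- k)"
  have k: "k = - int n" using False by (simp add: n_def)
  have "g((a - real n + real n, b), t) = g((a - real n,b),t)" using per_nat[OF assms] by blast
  moreover have "g((a, b - real n + real n), t) = g((a, b - real n),t)" using per_nat[OF assms] by blast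
  ultimately show ?thesis using k by simp
qed

lemma per_omega:
  assumes "periodic_x g"
  shows "\<exists>y\<in>Omega. g(x,t) = g(y,t)"
proof -
  obtain a b where x: "x = (a,b)" by (cases x)
  let ?y = "(a - of_int \<lfloor>a\<rfloor>, b - of_int \<lfloor>b\<rfloor>)"
  have "g((a,b),t) = g((a - of_int \<lfloor>a\<rfloor> + of_int \<lfloor>a\<rfloor>, b),t)" by simp
  also have "\<dots> = g((a - of_int \<lfloor>a\<rfloor>, b),t)" using per_int[OF assms] by blast
  also have "\<dots> = g((a - of_int \<lfloor>a\<rfloor>, b - of_int \<lfloor>b\<rfloor> + of_int \<lfloor>b\<rfloor>),t)" by simp
  also have "\<dots> = g(?y,t)" using per_int[OF assms] by blast
  finally have "g(x,t) = g(?y,t)" using x by simp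
  moreover have "a - of_int \<lfloor>a\<rfloor> \<le> 1" "b - of_int \<lfloor>b\<rfloor> \<le> 1"
    using floor_correct[of a] floor_correct[of b] by linarith+
  moreover have "?y \<in> Omega" unfolding Omega_def cbox_Pair_iff
    using calculation(2,3) by (auto simp: cbox_interval)
  ultimately show ?thesis by blast
qed




lemma touch:
  fixes w :: "pt3 \<Rightarrow> real" and \<phi> :: "real \<Rightarrow> real"
  assumes wc: "continuous_on UNIV w" and wp: "periodic_x w" and pc: "continuous_on {0..t0} \<phi>"
    and init: "\<And>x. \<phi> 0 < w(x,0)"
    and fail: "t' \<in> {0..t0}" "w(x',t') \<le> \<phi> t'"
  shows "\<exists>x t1. x\<in>Omega \<and> 0<t1 \<and> t1\<le>t0 \<and> w(x,t1) = \<phi> t1 \<and> (\<forall>y. \<phi> t1 \<le> w(y,t1))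
           \<and> (\<forall>s\<in>{0..<t1}. \<forall>y. \<phi> s < w(y,s))"
proof -
  define F where "F z = w z - \<phi> (snd z)" for z
  define B where "B = Omega \<times> {0..t0}"
  define C where "C = B \<inter> F -` {..0}"
  have cB: "compact B" unfolding B_def Omega_def by (intro compact_Times compact_cbox compact_Icc)
  have cF: "continuous_on B F" unfolding F_def
  proof (intro continuous_on_diff)
    show "continuous_on B w" using wc continuous_on_subset by blast
    show "continuous_on B (\<lambda>x. \<phi> (snd x))"
      by (rule continuous_on_compose2[OF pc continuous_on_snd]) (auto simp: B_def)
  qed
  have "closed C" unfolding C_def
    by (rule continuous_closed_preimage[OF cF]) (auto simp: cB compact_imp_closed)
  then have "compact (C \<inter> B)" using closed_Int_compact cB by blast
  moreover have "C \<inter> B = C" unfolding C_def by auto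
  ultimately have cC: "compact C" by simp
  obtain y' where y': "y' \<in> Omega" "w(x',t') = w(y',t')" using per_omega[OF wp] by blast
  then have "(y',t') \<in> C" using fail unfolding C_def B_def F_def by auto
  then have ne: "snd ` C \<noteq> {}" by blast
  have cs: "compact (snd ` C)" by (rule compact_continuous_image[OF _ cC]) (intro continuous_intros)
  have "\<exists>t\<in>snd ` C. \<forall>s\<in>snd ` C. t \<le> s" by (rule compact_attains_inf[OF cs ne])
  then obtain t1 where t1: "t1 \<in> snd ` C" "\<forall>s\<in>snd ` C. t1 \<le> s" by blast
  then obtain y where yC: "(y,t1) \<in> C" by force
  then have y: "y \<in> Omega" "t1 \<in> {0..t0}" "w(y,t1) \<le> \<phi> t1" unfolding C_def B_def F_def by auto
  have "t1 \<noteq> 0" using y(3) init[of y] by auto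
  with y have t1pos: "0 < t1" by auto
  have before: "\<forall>s\<in>{0..<t1}. \<forall>z. \<phi> s < w(z,s)"
  proof (intro ballI allI)
    fix s z assume s: "s \<in> {0..<t1}"
    obtain y2 where y2: "y2 \<in> Omega" "w(z,s) = w(y2,s)" using per_omega[OF wp] by blast
    show "\<phi> s < w(z,s)"
    proof (rule ccontr)
      assume "\<not> \<phi> s < w(z,s)"
      then have "(y2,s) \<in> C" using y2 s y(2) unfolding C_def B_def F_def by auto
      then have "t1 \<le> s" using t1(2) by force
      then show False using s by auto
    qed
  qed
  have atT: "\<forall>z. \<phi> t1 \<le> w(z,t1)"
  proof
    fix z
    show "\<phi> t1 \<le> w(z,t1)"
    proof (rule ccontr)
      assume neg: "\<not> \<phi> t1 \<le> w(z,t1)"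
      define G where "G s = w(z,s) - \<phi> s" for s
      have cG: "continuous_on {0..t0} G" unfolding G_def
      proof (intro continuous_on_diff pc)
        show "continuous_on {0..t0} (\<lambda>s. w (z, s))"
          by (rule continuous_on_compose2[OF wc]) (auto intro!: continuous_intros)
      qed
      have "0 < - G t1" using neg by (simp add: G_def)
      then obtain d where d: "d > 0" "\<forall>x'\<in>{0..t0}. dist x' t1 < d \<longrightarrow> dist (G x') (G t1) < - G t1"
        using cG y(2) unfolding continuous_on_iff by metis
      define s where "s = max 0 (t1 - d/2)"
      have s: "s \<in> {0..t0}" "s < t1" "dist s t1 < d" using y(2) d(1) t1pos
        unfolding s_def dist_real_def by auto
      then have "G s < 0" using d(2) unfolding dist_real_def by fastforce
      moreover have "s \<in> {0..<t1}" using s by auto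
      then have "\<phi> s < w(z,s)" using before by blast
      then have "G s > 0" unfolding G_def by auto
      ultimately show False by simp
    qed
  qed
  have "w(y,t1) = \<phi> t1" using atT y(3) by (meson order_antisym)
  then show ?thesis by (intro exI[of _ y] exI[of _ t1] conjI y(1) t1pos atT before) (use y in auto)
qed

lemma touch_deriv:
  fixes g :: "real \<Rightarrow> real"
  assumes "(g has_real_derivative dg) (at t1)" "(\<phi> has_real_derivative dp) (at t1)"
    "0 < t1" "g t1 = \<phi> t1" "\<forall>s\<in>{0..<t1}. \<phi> s < g s"
  shows "dg \<le> dp"
proof (rule ccontr)
  assume "\<not> dg \<le> dp"
  then have "0 < dg - dp" by simp
  moreover have "((\<lambda>s. g s - \<phi> s) has_real_derivative dg - dp) (at t1)"
    using assms by (intro derivative_intros)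
  ultimately obtain d where d: "d > 0" "\<forall>h>0. h < d \<longrightarrow> g (t1 - h) - \<phi> (t1 - h) < g t1 - \<phi> t1"
    using DERIV_pos_inc_left by blast
  define h where "h = min (d/2) t1"
  have "h > 0" "h < d" "t1 - h \<in> {0..<t1}" using d(1) assms(3) unfolding h_def by auto
  then show False using d(2) assms(4,5) by fastforce
qed




lemma dx1_mult:
  assumes "f1 differentiable (at z)" "f2 differentiable (at z)"
  shows "dx1 (\<lambda>w. f1 w * f2 w) z = dx1 f1 z * f2 z + f1 z * dx1 f2 z"
proof -
  obtain a b t where z: "z = ((a,b),t)" by (metis prod.collapse)
  have "((\<lambda>s. f1((s,b),t) * f2((s,b),t)) has_real_derivative
        dx1 f1 z * f2((a,b),t) + f1((a,b),t) * dx1 f2 z) (at a)"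
    using DERIV_mult[OF slice1 slice1, of f1 a b t f2] assms z by (simp add: algebra_simps)
  then have "deriv (\<lambda>s. f1((s,b),t) * f2((s,b),t)) a = dx1 f1 z * f2 z + f1 z * dx1 f2 z"
    using z by (simp add: DERIV_imp_deriv)
  then show ?thesis using z by (simp add: pdiff_def)
qed

lemma dx2_mult:
  assumes "f1 differentiable (at z)" "f2 differentiable (at z)"
  shows "dx2 (\<lambda>w. f1 w * f2 w) z = dx2 f1 z * f2 z + f1 z * dx2 f2 z"
proof -
  obtain a b t where z: "z = ((a,b),t)" by (metis prod.collapse)
  have "((\<lambda>s. f1((a,s),t) * f2((a,s),t)) has_real_derivative
        dx2 f1 z * f2((a,b),t) + f1((a,b),t) * dx2 f2 z) (at b)"
    using DERIV_mult[OF slice2 slice2, of f1 a b t f2] assms z by (simp add: algebra_simps)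
  then have "deriv (\<lambda>s. f1((a,s),t) * f2((a,s),t)) b = dx2 f1 z * f2 z + f1 z * dx2 f2 z"
    using z by (simp add: DERIV_imp_deriv)
  then show ?thesis using z by (simp add: pdiff_def)
qed

lemma divflux_expand:
  assumes "g differentiable (at z)" "(\<lambda>w. fst(u w)) differentiable (at z)"
     "(\<lambda>w. snd(u w)) differentiable (at z)"
  shows "divflux g u z = dx1 g z * fst (u z) + dx2 g z * snd (u z) + g z * divu u z"
  unfolding divflux_def divu_def using dx1_mult[OF assms(1,2)] dx2_mult[OF assms(1,3)]
  by (simp add: algebra_simps)

lemma crit_min:
  assumes "g differentiable (at (x,t))" "\<forall>y. g(x,t) \<le> g(y,t)"
  shows "dx1 g (x,t) = 0 \<and> dx2 g (x,t) = 0"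
proof -
  obtain a b where x: "x = (a,b)" by (cases x)
  have "dx1 g ((a,b),t) = 0"
    by (rule DERIV_local_min[OF slice1[of g a b t] zero_less_one]) (use assms x in auto)
  moreover have "dx2 g ((a,b),t) = 0"
    by (rule DERIV_local_min[OF slice2[of g a b t] zero_less_one]) (use assms x in auto)
  ultimately show ?thesis using x by simp
qed

lemma crit_max:
  assumes "g differentiable (at (x,t))" "\<forall>y. g(y,t) \<le> g(x,t)"
  shows "dx1 g (x,t) = 0 \<and> dx2 g (x,t) = 0"
proof -
  obtain a b where x: "x = (a,b)" by (cases x)
  have "dx1 g ((a,b),t) = 0"
    by (rule DERIV_local_max[OF slice1[of g a b t] zero_less_one]) (use assms x in auto)
  moreover have "dx2 g ((a,b),t) = 0"
    by (rule DERIV_local_max[OF slice2[of g a b t] zero_less_one]) (use assms x in auto)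
  ultimately show ?thesis using x by simp
qed




lemma SA_pos: assumes "a < 0" "0 < \<omega>" "0 < \<nu>" "0 < h0"
  shows "0 < S_A f \<omega> \<nu> h0 hh a"
proof -
  let ?S = "S_h f \<omega> \<nu> hh a"
  have "\<bar>?S\<bar> < sqrt (?S\<^sup>2 + \<omega>\<^sup>2)"
    using assms(2) by (metis abs_less_iff real_sqrt_abs real_sqrt_less_mono less_add_same_cancel1 zero_less_power2 less_irrefl)
  then have s: "0 < sqrt (?S\<^sup>2 + \<omega>\<^sup>2) - ?S" by linarith
  have d: "0 < 2 * pos hh + \<nu>" using assms(3) by (simp add: pos_def)
  have "0 \<le> pos (f 0) / (h0 + \<nu>) * (1 - a)" using assms by (simp add: pos_def)
  moreover have "a / (2 * pos hh + \<nu>) < 0" using d assms(1) by (simp add: divide_neg_pos)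
  moreover have "0 < (sqrt (?S\<^sup>2 + \<omega>\<^sup>2) - ?S) / 2" using s by simp
  ultimately have "0 < pos (f 0) / (h0 + \<nu>) * (1 - a) - a / (2 * pos hh + \<nu>) * ((sqrt (?S\<^sup>2 + \<omega>\<^sup>2) - ?S) / 2)"
    by (smt (verit) mult_neg_pos)
  then show ?thesis unfolding S_A_def .
qed

lemma SA_neg: assumes "1 < a" "0 < \<omega>" "0 < \<nu>" "0 < h0"
  shows "S_A f \<omega> \<nu> h0 hh a < 0"
proof -
  let ?S = "S_h f \<omega> \<nu> hh a"
  have "\<bar>?S\<bar> < sqrt (?S\<^sup>2 + \<omega>\<^sup>2)"
    using assms(2) by (metis abs_less_iff real_sqrt_abs real_sqrt_less_mono less_add_same_cancel1 zero_less_power2 less_irrefl)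
  then have s: "0 < sqrt (?S\<^sup>2 + \<omega>\<^sup>2) - ?S" by linarith
  have d: "0 < 2 * pos hh + \<nu>" using assms(3) by (simp add: pos_def)
  have "pos (f 0) / (h0 + \<nu>) * (1 - a) \<le> 0" using assms
    by (intro mult_nonneg_nonpos) (auto simp: pos_def)
  moreover have "0 < a / (2 * pos hh + \<nu>)" using d assms(1) by simp
  moreover have "0 < (sqrt (?S\<^sup>2 + \<omega>\<^sup>2) - ?S) / 2" using s by simp
  ultimately have "pos (f 0) / (h0 + \<nu>) * (1 - a) - a / (2 * pos hh + \<nu>) * ((sqrt (?S\<^sup>2 + \<omega>\<^sup>2) - ?S) / 2) < 0"
    by (smt (verit) mult_pos_pos)
  then show ?thesis unfolding S_A_def .
qed

lemma chiA_bd: assumes "0 < \<omega>" shows "0 \<le> 1 - chi_A \<omega> a" "1 - chi_A \<omega> a \<le> 1"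
  using assms by (auto simp: chi_A_def pos_def)

lemma chiA_1: "1 \<le> a \<Longrightarrow> 0 < \<omega> \<Longrightarrow> chi_A \<omega> a = 1"
  by (auto simp: chi_A_def pos_def)

lemma neg_bound: fixes a dv Dm c :: real
  assumes "a < 0" "\<bar>dv\<bar> \<le> Dm" "0 \<le> c" "c \<le> 1"
  shows "a * Dm \<le> - a * dv * c"
proof -
  have "\<bar>dv\<bar> * c \<le> \<bar>dv\<bar>" using assms(3,4) by (simp add: mult_right_le_one_le)
  then have "\<bar>dv\<bar> * c \<le> Dm" using assms(2) by linarith
  then have "\<bar>a\<bar> * (\<bar>dv\<bar> * c) \<le> \<bar>a\<bar> * Dm" by (simp add: mult_left_mono)
  then have "\<bar>a * dv * c\<bar> \<le> \<bar>a\<bar> * Dm"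
    using assms(3) by (simp add: abs_mult mult.assoc)
  then show ?thesis using assms(1) by (smt (verit) abs_le_iff mult_minus_left abs_of_neg)
qed




context
  fixes \<omega> \<nu> T h0 :: real and f :: "real \<Rightarrow> real" and u :: "pt3 \<Rightarrow> real \<times> real"
    and h A :: "pt3 \<Rightarrow> real"
  assumes om: "0 < \<omega>" and nu: "0 < \<nu>" and T: "0 < T" and h0: "0 < h0"
    and u1d: "\<And>z. (\<lambda>w. fst (u w)) differentiable (at z)"
    and u2d: "\<And>z. (\<lambda>w. snd (u w)) differentiable (at z)"
    and divc: "continuous_on UNIV (divu u)"
    and hd: "\<And>z. h differentiable (at z)" and Ad: "\<And>z. A differentiable (at z)"
    and hper: "periodic_x h" and Aper: "periodic_x A"
    and h_eq: "\<And>z. snd z \<in> {0..T} \<Longrightarrow> dt h z + divflux h u z = S_h f \<omega> \<nu> (h z) (A z)"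
    and A_eq: "\<And>z. snd z \<in> {0..T} \<Longrightarrow>
        dt A z + divflux A u z = S_A f \<omega> \<nu> h0 (h z) (A z) + A z * divu u z * chi_A \<omega> (A z)"
begin

lemma hc: "continuous_on UNIV h"
  using hd by (meson continuous_at_imp_continuous_on differentiable_imp_continuous_within)
lemma Ac: "continuous_on UNIV A"
  using Ad by (meson continuous_at_imp_continuous_on differentiable_imp_continuous_within)

lemma Dm_ex: "\<exists>Dm\<ge>0. \<forall>x\<in>Omega. \<forall>s\<in>{0..T}. \<bar>divu u (x,s)\<bar> \<le> Dm"
proof -
  have "compact (Omega \<times> {0..T})" unfolding Omega_def by (intro compact_Times compact_cbox compact_Icc)
  moreover have "Omega \<times> {0..T} \<noteq> {}" using T unfolding Omega_def by (auto simp: cbox_Pair_iff cbox_interval)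
  moreover have "continuous_on (Omega \<times> {0..T}) (\<lambda>z. \<bar>divu u z\<bar>)"
    using divc continuous_on_subset continuous_on_rabs by blast
  ultimately obtain zm where "\<forall>y\<in>Omega \<times> {0..T}. \<bar>divu u y\<bar> \<le> \<bar>divu u zm\<bar>"
    using continuous_attains_sup by blast
  then show ?thesis by (intro exI[of _ "\<bar>divu u zm\<bar>"]) auto
qed

lemma A_crit:
  assumes "snd z \<in> {0..T}" "dx1 A z = 0" "dx2 A z = 0"
  shows "dt A z = S_A f \<omega> \<nu> h0 (h z) (A z) - A z * divu u z * (1 - chi_A \<omega> (A z))"
proof -
  have "divflux A u z = A z * divu u z" using divflux_expand[OF Ad u1d u2d] assms by simp
  then show ?thesis using A_eq[OF assms(1)] by (simp add: algebra_simps)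
qed

lemma h_crit:
  assumes "snd z \<in> {0..T}" "dx1 h z = 0" "dx2 h z = 0"
  shows "dt h z = S_h f \<omega> \<nu> (h z) (A z) - h z * divu u z"
proof -
  have "divflux h u z = h z * divu u z" using divflux_expand[OF hd u1d u2d] assms by simp
  then show ?thesis using h_eq[OF assms(1)] by (simp add: algebra_simps)
qed

lemma A_nonneg:
  assumes init: "\<And>x. 0 \<le> A(x,0)" and t': "t' \<in> {0..T}"
  shows "0 \<le> A(x',t')"
proof (rule ccontr)
  assume neg: "\<not> 0 \<le> A(x',t')"
  obtain Dm where Dm: "Dm \<ge> 0" "\<forall>x\<in>Omega. \<forall>s\<in>{0..T}. \<bar>divu u (x,s)\<bar> \<le> Dm" using Dm_ex by blast
  define \<epsilon> where "\<epsilon> = - A(x',t') / exp ((Dm+1)*T)"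
  have ep: "\<epsilon> > 0" using neg by (auto simp: \<epsilon>_def intro!: divide_neg_pos)
  define \<phi> where "\<phi> s = - \<epsilon> * exp ((Dm + 1) * s)" for s :: real
  have "exp ((Dm+1)*t') \<le> exp ((Dm+1)*T)" using t' Dm(1) by (simp add: mult_left_mono)
  then have "\<epsilon> * exp ((Dm+1)*t') \<le> \<epsilon> * exp ((Dm+1)*T)" using ep by simp
  also have "\<dots> = - A(x',t')" by (simp add: \<epsilon>_def)
  finally have fail: "A(x',t') \<le> \<phi> t'" by (simp add: \<phi>_def)
  have pc: "continuous_on {0..T} \<phi>" unfolding \<phi>_def by (intro continuous_intros)
  have i: "\<And>x. \<phi> 0 < A(x,0)" using init ep by (simp add: \<phi>_def) (smt (verit) init)
  obtain x t1 where tt: "x\<in>Omega" "0<t1" "t1\<le>T" "A(x,t1) = \<phi> t1" "\<forall>y. \<phi> t1 \<le> A(y,t1)"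
     "\<forall>s\<in>{0..<t1}. \<forall>y. \<phi> s < A(y,s)"
    using touch[OF Ac Aper pc i t' fail] by blast
  have cr: "dx1 A (x,t1) = 0 \<and> dx2 A (x,t1) = 0" using crit_min[OF Ad] tt(4,5) by metis
  have eq: "dt A (x,t1) = S_A f \<omega> \<nu> h0 (h (x,t1)) (A (x,t1)) - A (x,t1) * divu u (x,t1) * (1 - chi_A \<omega> (A (x,t1)))"
    using A_crit[of "(x,t1)"] cr tt by auto
  have dphi: "(\<phi> has_real_derivative (Dm+1) * \<phi> t1) (at t1)"
    unfolding \<phi>_def by (auto intro!: derivative_eq_intros)
  have le: "dt A (x,t1) \<le> (Dm+1) * \<phi> t1"
  proof -
    have b: "\<forall>s\<in>{0..<t1}. \<phi> s < A(x,s)" using tt(6) by blast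
    show ?thesis by (rule touch_deriv[OF slicet[OF Ad] dphi tt(2) tt(4)]) (use b in auto)
  qed
  have an: "\<phi> t1 < 0" using ep by (simp add: \<phi>_def)
  have "0 < S_A f \<omega> \<nu> h0 (h (x,t1)) (A (x,t1))" using SA_pos an tt(4) om nu h0 by simp
  moreover have "\<phi> t1 * Dm \<le> - A (x,t1) * divu u (x,t1) * (1 - chi_A \<omega> (A (x,t1)))"
    using neg_bound[OF an, of "divu u (x,t1)" Dm] Dm(2) tt chiA_bd[OF om] by auto
  ultimately have "\<phi> t1 * Dm < dt A (x,t1)" using eq by linarith
  moreover have "(Dm+1) * \<phi> t1 < \<phi> t1 * Dm" using an by (simp add: algebra_simps)
  ultimately show False using le by linarith
qed

lemma A_le1:
  assumes init: "\<And>x. A(x,0) \<le> 1" and t': "t' \<in> {0..T}"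
  shows "A(x',t') \<le> 1"
proof (rule ccontr)
  assume neg: "\<not> A(x',t') \<le> 1"
  define \<phi> where "\<phi> s = - ((1 + A(x',t'))/2)" for s :: real
  have fail: "(\<lambda>z. - A z)(x',t') \<le> \<phi> t'" using neg by (simp add: \<phi>_def)
  have pc: "continuous_on {0..T} \<phi>" unfolding \<phi>_def by (intro continuous_intros)
  have i: "\<And>x. \<phi> 0 < (\<lambda>z. - A z)(x,0)" using init neg by (simp add: \<phi>_def) (smt (verit) init)
  have mc: "continuous_on UNIV (\<lambda>z. - A z)" using Ac by (intro continuous_intros)
  have mp: "periodic_x (\<lambda>z. - A z)" using Aper by (simp add: periodic_x_def)
  obtain x t1 where tt: "x\<in>Omega" "0<t1" "t1\<le>T" "- A(x,t1) = \<phi> t1" "\<forall>y. \<phi> t1 \<le> - A(y,t1)"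
     "\<forall>s\<in>{0..<t1}. \<forall>y. \<phi> s < - A(y,s)"
    using touch[OF mc mp pc i t' fail] by blast
  have cr: "dx1 A (x,t1) = 0 \<and> dx2 A (x,t1) = 0" using crit_max[OF Ad] tt(4,5) by (metis neg_le_iff_le)
  have eq: "dt A (x,t1) = S_A f \<omega> \<nu> h0 (h (x,t1)) (A (x,t1)) - A (x,t1) * divu u (x,t1) * (1 - chi_A \<omega> (A (x,t1)))"
    using A_crit[of "(x,t1)"] cr tt by auto
  have a1: "1 < A(x,t1)" using tt(4) neg by (simp add: \<phi>_def)
  have dphi: "(\<phi> has_real_derivative 0) (at t1)"
    unfolding \<phi>_def by (auto intro!: derivative_eq_intros)
  have le: "- dt A (x,t1) \<le> 0"
  proof -
    have b: "\<forall>s\<in>{0..<t1}. \<phi> s < - A(x,s)" using tt(6) by blast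
    show ?thesis by (rule touch_deriv[OF DERIV_minus[OF slicet[OF Ad]] dphi tt(2)]) (use tt(4) b in auto)
  qed
  have "dt A (x,t1) = S_A f \<omega> \<nu> h0 (h (x,t1)) (A (x,t1))" using eq chiA_1[OF _ om] a1 by simp
  moreover have "S_A f \<omega> \<nu> h0 (h (x,t1)) (A (x,t1)) < 0" using SA_neg a1 om nu h0 by blast
  ultimately show False using le by linarith
qed

lemma h_nonneg:
  assumes init: "\<And>x. 0 < h(x,0)" and t': "t' \<in> {0..T}"
  shows "0 \<le> h(x',t')"
proof (rule ccontr)
  assume neg: "\<not> 0 \<le> h(x',t')"
  obtain Dm where Dm: "Dm \<ge> 0" "\<forall>x\<in>Omega. \<forall>s\<in>{0..T}. \<bar>divu u (x,s)\<bar> \<le> Dm" using Dm_ex by blast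
  define \<epsilon> where "\<epsilon> = - h(x',t') / exp ((Dm+1)*T)"
  have ep: "\<epsilon> > 0" using neg by (auto simp: \<epsilon>_def intro!: divide_neg_pos)
  define \<phi> where "\<phi> s = - \<epsilon> * exp ((Dm + 1) * s)" for s :: real
  have "exp ((Dm+1)*t') \<le> exp ((Dm+1)*T)" using t' Dm(1) by (simp add: mult_left_mono)
  then have "\<epsilon> * exp ((Dm+1)*t') \<le> \<epsilon> * exp ((Dm+1)*T)" using ep by simp
  also have "\<dots> = - h(x',t')" by (simp add: \<epsilon>_def)
  finally have fail: "h(x',t') \<le> \<phi> t'" by (simp add: \<phi>_def)
  have pc: "continuous_on {0..T} \<phi>" unfolding \<phi>_def by (intro continuous_intros)
  have i: "\<And>x. \<phi> 0 < h(x,0)" using init ep by (simp add: \<phi>_def) (smt (verit) init)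
  obtain x t1 where tt: "x\<in>Omega" "0<t1" "t1\<le>T" "h(x,t1) = \<phi> t1" "\<forall>y. \<phi> t1 \<le> h(y,t1)"
     "\<forall>s\<in>{0..<t1}. \<forall>y. \<phi> s < h(y,s)"
    using touch[OF hc hper pc i t' fail] by blast
  have cr: "dx1 h (x,t1) = 0 \<and> dx2 h (x,t1) = 0" using crit_min[OF hd] tt(4,5) by metis
  have eq: "dt h (x,t1) = S_h f \<omega> \<nu> (h (x,t1)) (A (x,t1)) - h (x,t1) * divu u (x,t1)"
    using h_crit[of "(x,t1)"] cr tt by auto
  have dphi: "(\<phi> has_real_derivative (Dm+1) * \<phi> t1) (at t1)"
    unfolding \<phi>_def by (auto intro!: derivative_eq_intros)
  have le: "dt h (x,t1) \<le> (Dm+1) * \<phi> t1"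
  proof -
    have b: "\<forall>s\<in>{0..<t1}. \<phi> s < h(x,s)" using tt(6) by blast
    show ?thesis by (rule touch_deriv[OF slicet[OF hd] dphi tt(2) tt(4)]) (use b in auto)
  qed
  have an: "\<phi> t1 < 0" using ep by (simp add: \<phi>_def)
  have "S_h f \<omega> \<nu> (h (x,t1)) (A (x,t1)) = 0" using an tt(4) by (simp add: S_h_def chi_h_def pos_def)
  moreover have "\<phi> t1 * Dm \<le> - h (x,t1) * divu u (x,t1) * 1"
    using neg_bound[OF an, of "divu u (x,t1)" Dm 1] Dm(2) tt by auto
  ultimately have "\<phi> t1 * Dm \<le> dt h (x,t1)" using eq by linarith
  moreover have "(Dm+1) * \<phi> t1 < \<phi> t1 * Dm" using an by (simp add: algebra_simps)
  ultimately show False using le by linarith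
qed

end



lemma Omega_ne: "(0,0) \<in> Omega" unfolding Omega_def by (auto simp: cbox_Pair_iff cbox_interval)

lemma compact_Omega: "compact Omega" unfolding Omega_def by simp

lemma Linf_facts:
  assumes divc: "continuous_on UNIV (divu u)"
  shows "bdd_above ((\<lambda>x. \<bar>divu u (x,s)\<bar>) ` Omega)"
    and "x \<in> Omega \<Longrightarrow> \<bar>divu u (x,s)\<bar> \<le> Linf_divu u s"
    and "0 \<le> Linf_divu u s"
proof -
  have c: "continuous_on Omega (\<lambda>x. \<bar>divu u (x,s)\<bar>)"
    by (rule continuous_on_compose2[OF continuous_on_rabs[OF divc], of _ "\<lambda>x. (x,s)"]) (auto intro!: continuous_intros)
  show b: "bdd_above ((\<lambda>x. \<bar>divu u (x,s)\<bar>) ` Omega)"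
    by (rule bounded_imp_bdd_above[OF compact_imp_bounded[OF compact_continuous_image[OF c compact_Omega]]])
  have le: "\<And>y. y \<in> Omega \<Longrightarrow> \<bar>divu u (y,s)\<bar> \<le> Linf_divu u s"
    unfolding Linf_divu_def by (rule cSUP_upper[OF _ b])
  show "x \<in> Omega \<Longrightarrow> \<bar>divu u (x,s)\<bar> \<le> Linf_divu u s" by (rule le)
  show "0 \<le> Linf_divu u s" using le[OF Omega_ne] by (meson abs_ge_zero order_trans)
qed

lemma Linf_cont:
  assumes divc: "continuous_on UNIV (divu u)"
  shows "continuous_on {a..b} (Linf_divu u)"
proof -
  let ?S = "Omega \<times> {a..b}"
  have cS: "compact ?S" using compact_Omega by (intro compact_Times compact_Icc)
  have "uniformly_continuous_on ?S (\<lambda>z. \<bar>divu u z\<bar>)"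
    by (rule compact_uniformly_continuous[OF _ cS]) (use divc continuous_on_subset continuous_on_rabs in blast)
  then have uc: "\<forall>e>0. \<exists>d>0. \<forall>z\<in>?S. \<forall>z'\<in>?S. dist z' z < d \<longrightarrow> dist \<bar>divu u z'\<bar> \<bar>divu u z\<bar> < e"
    unfolding uniformly_continuous_on_def by metis
  have key: "Linf_divu u s' \<le> Linf_divu u s + e"
    if ss: "s \<in> {a..b}" "s' \<in> {a..b}" and un: "\<forall>z\<in>?S. \<forall>z'\<in>?S. dist z' z < d \<longrightarrow> dist \<bar>divu u z'\<bar> \<bar>divu u z\<bar> < e"
       and ds: "dist s' s < d" for s s' d e
  proof -
    have "\<bar>divu u (x,s')\<bar> \<le> Linf_divu u s + e" if x: "x \<in> Omega" for x
    proof -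
      have "dist (x,s') (x,s) < d" using ds by (simp add: dist_Pair_Pair)
      then have "dist \<bar>divu u (x,s')\<bar> \<bar>divu u (x,s)\<bar> < e" using un x ss by auto
      moreover have "\<bar>divu u (x,s)\<bar> \<le> Linf_divu u s" using Linf_facts(2)[OF divc x] .
      ultimately show ?thesis unfolding dist_real_def by linarith
    qed
    then show ?thesis unfolding Linf_divu_def[of u s'] using Omega_ne by (intro cSUP_least) auto
  qed
  show ?thesis unfolding continuous_on_iff
  proof (intro ballI allI impI)
    fix s e :: real assume s: "s \<in> {a..b}" and e: "0 < e"
    obtain d where d: "d > 0" "\<forall>z\<in>?S. \<forall>z'\<in>?S. dist z' z < d \<longrightarrow> dist \<bar>divu u z'\<bar> \<bar>divu u z\<bar> < e/2"
      using uc e half_gt_zero by blast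
    have d': "\<forall>z\<in>?S. \<forall>z'\<in>?S. dist z' z < d \<longrightarrow> dist \<bar>divu u z'\<bar> \<bar>divu u z\<bar> < e/2"
      using d(2) by (metis dist_commute)
    show "\<exists>d>0. \<forall>x'\<in>{a..b}. dist x' s < d \<longrightarrow> dist (Linf_divu u x') (Linf_divu u s) < e"
    proof (intro exI[of _ d] conjI ballI impI d(1))
      fix s' assume s': "s' \<in> {a..b}" "dist s' s < d"
      have "Linf_divu u s' \<le> Linf_divu u s + e/2" using key[OF s s'(1) d(2) s'(2)] .
      moreover have "Linf_divu u s \<le> Linf_divu u s' + e/2"
        using key[OF s'(1) s d(2)] s'(2) by (simp add: dist_commute)
      ultimately show "dist (Linf_divu u s') (Linf_divu u s) < e" unfolding dist_real_def using e by linarith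
    qed
  qed
qed




lemma Sh_bound:
  assumes "0 \<le> a" "a \<le> 1" "0 < \<nu>" "\<And>y. f_lo \<le> f y \<and> f y \<le> f_hi"
  shows "\<bar>S_h f \<omega> \<nu> hh a\<bar> \<le> \<bar>f_hi\<bar> + \<bar>f_lo\<bar>"
proof -
  let ?K = "\<bar>f_hi\<bar> + \<bar>f_lo\<bar>"
  have fb: "\<bar>f y\<bar> \<le> ?K" for y using assms(4)[of y] by linarith
  let ?y = "pos hh / (pos a + \<omega>)"
  have "\<bar>f ?y * a\<bar> \<le> ?K * a" using fb[of ?y] assms(1) by (simp add: abs_mult mult_right_mono)
  moreover have "\<bar>(1 - a) * f 0\<bar> \<le> (1 - a) * ?K" using fb[of 0] assms(2) by (simp add: abs_mult mult_left_mono)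
  moreover have "\<bar>f ?y * a + (1 - a) * f 0\<bar> \<le> \<bar>f ?y * a\<bar> + \<bar>(1 - a) * f 0\<bar>" by (rule abs_triangle_ineq)
  moreover have "?K * a + (1 - a) * ?K = ?K" by (simp add: algebra_simps)
  ultimately have 1: "\<bar>f ?y * a + (1 - a) * f 0\<bar> \<le> ?K" by linarith
  have c0: "0 \<le> chi_h \<nu> hh" "chi_h \<nu> hh \<le> 1" using assms(3) by (auto simp: chi_h_def pos_def)
  have "\<bar>S_h f \<omega> \<nu> hh a\<bar> = \<bar>f ?y * a + (1 - a) * f 0\<bar> * chi_h \<nu> hh"
    unfolding S_h_def using c0 by (simp add: abs_mult)
  also have "\<dots> \<le> ?K * 1" using 1 c0 by (intro mult_mono) auto
  finally show ?thesis by simp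
qed

definition EE :: "(pt3 \<Rightarrow> real \<times> real) \<Rightarrow> real \<Rightarrow> real" where
  "EE u s = integral {0..s} (Linf_divu u)"

context
  fixes u :: "pt3 \<Rightarrow> real \<times> real" and T :: real
  assumes T: "0 < T" and divc: "continuous_on UNIV (divu u)"
begin


lemma EE_fun: "EE u = (\<lambda>s. integral {0..s} (Linf_divu u))" by (rule ext) (simp add: EE_def)

lemma EE_cont: "continuous_on {0..T} (EE u)"
  unfolding EE_fun by (rule indefinite_integral_continuous_1[OF integrable_continuous_real[OF Linf_cont[OF divc]]])

lemma EE_deriv: assumes "0 < t" "t \<le> T" shows "(EE u has_real_derivative Linf_divu u t) (at t)"
proof -
  have "(EE u has_real_derivative Linf_divu u t) (at t within {0..T+1})"
    unfolding EE_fun by (rule integral_has_real_derivative[OF Linf_cont[OF divc]]) (use assms in auto)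
  moreover have "t \<in> interior {0..T+1}" using assms by auto
  then have "at t within {0..T+1} = at t" by (rule at_within_interior)
  ultimately show ?thesis by metis
qed

lemma EE_mono: assumes "0 \<le> s" "s \<le> t" shows "EE u s \<le> EE u t" "0 \<le> EE u s"
proof -
  have i: "Linf_divu u integrable_on {0..t}" by (rule integrable_continuous_real[OF Linf_cont[OF divc]])
  have "integral {0..s} (Linf_divu u) + integral {s..t} (Linf_divu u) = integral {0..t} (Linf_divu u)"
    by (rule Henstock_Kurzweil_Integration.integral_combine[OF assms i])
  moreover have "0 \<le> integral {s..t} (Linf_divu u)"
    by (rule integral_nonneg[OF integrable_continuous_real[OF Linf_cont[OF divc]]]) (use Linf_facts(3)[OF divc] in auto)
  ultimately show "EE u s \<le> EE u t" unfolding EE_def by linarith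
  show "0 \<le> EE u s" unfolding EE_def
    by (rule integral_nonneg[OF integrable_continuous_real[OF Linf_cont[OF divc]]]) (use Linf_facts(3)[OF divc] in auto)
qed

lemma EE0: "EE u 0 = 0" unfolding EE_def by simp

end




lemma lin1: fixes a P Ks Kt es eT KE h \<epsilon> :: real
  shows "a/2 \<le> P \<Longrightarrow> Ks \<le> Kt \<Longrightarrow> es \<le> eT \<Longrightarrow> KE = Ks + es \<Longrightarrow> 6*Kt \<le> h \<Longrightarrow> 0<\<epsilon>
     \<Longrightarrow> \<epsilon> + eT = h/12 \<Longrightarrow> a = h - \<epsilon> \<Longrightarrow> h/4 \<le> P - KE"
  by linarith

lemma lin2: fixes P H e KE Kt et eT hl :: real
  shows "P \<le> 2*(H + e + KE) \<Longrightarrow> KE = Kt + et \<Longrightarrow> et \<le> eT \<Longrightarrow> 6*Kt \<le> hl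
    \<Longrightarrow> e + eT = hl/12 \<Longrightarrow> hl \<le> H \<Longrightarrow> 0 < hl \<Longrightarrow> P \<le> 4*H"
  by (simp add: field_simps)

context
  fixes \<omega> \<nu> T f_lo f_hi h_lo h_hi :: real and f :: "real \<Rightarrow> real" and u :: "pt3 \<Rightarrow> real \<times> real"
    and h A :: "pt3 \<Rightarrow> real"
  assumes nu: "0 < \<nu>" and T: "0 < T"
    and u1d: "\<And>z. (\<lambda>w. fst (u w)) differentiable (at z)"
    and u2d: "\<And>z. (\<lambda>w. snd (u w)) differentiable (at z)"
    and divc: "continuous_on UNIV (divu u)"
    and hd: "\<And>z. h differentiable (at z)"
    and hper: "periodic_x h"
    and h_eq: "\<And>z. snd z \<in> {0..T} \<Longrightarrow> dt h z + divflux h u z = S_h f \<omega> \<nu> (h z) (A z)"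
    and fbd: "\<And>y. f_lo \<le> f y \<and> f y \<le> f_hi"
    and A01: "\<And>x s. s \<in> {0..T} \<Longrightarrow> 0 \<le> A(x,s) \<and> A(x,s) \<le> 1"
    and hlo: "0 < h_lo" and hinit: "\<And>x. h_lo \<le> h(x,0) \<and> h(x,0) \<le> h_hi"
begin

lemma hc8: "continuous_on UNIV h"
  using hd by (meson continuous_at_imp_continuous_on differentiable_imp_continuous_within)

lemma h_crit8:
  assumes "snd z \<in> {0..T}" "dx1 h z = 0" "dx2 h z = 0"
  shows "dt h z = S_h f \<omega> \<nu> (h z) (A z) - h z * divu u z"
proof -
  have "divflux h u z = h z * divu u z" using divflux_expand[OF hd u1d u2d] assms by simp
  then show ?thesis using h_eq[OF assms(1)] by (simp add: algebra_simps)
qed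

lemma Sb8: "s \<in> {0..T} \<Longrightarrow> \<bar>S_h f \<omega> \<nu> (h(x,s)) (A(x,s))\<bar> \<le> \<bar>f_hi\<bar> + \<bar>f_lo\<bar>"
  using Sh_bound[of "A(x,s)" \<nu> f_lo f f_hi] A01 nu fbd by blast

lemma h_lower:
  assumes t0: "t0 \<in> {0..T}" and c1: "6 * (\<bar>f_hi\<bar> + \<bar>f_lo\<bar>) * t0 \<le> h_lo" and c2: "exp (EE u t0) \<le> 2"
  shows "h_lo / 4 \<le> h(x',t0)"
proof -
  define K where "K = \<bar>f_hi\<bar> + \<bar>f_lo\<bar>"
  have K0: "0 \<le> K" by (simp add: K_def)
  define \<epsilon> where "\<epsilon> = h_lo / (12 * (1 + T))"
  have ep: "0 < \<epsilon>" "\<epsilon> * (1 + T) = h_lo / 12" using hlo T by (auto simp: \<epsilon>_def field_simps)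
  define \<phi> where "\<phi> s = (h_lo - \<epsilon>) * exp (- EE u s) - (K + \<epsilon>) * s" for s :: real
  have "0 \<le> \<epsilon> * T" using ep(1) T by simp
  then have "\<epsilon> \<le> \<epsilon> * (1 + T)" by (simp add: algebra_simps)
  then have hle: "\<epsilon> < h_lo" using ep(2) hlo by linarith
  have bnd: "h_lo / 4 \<le> \<phi> s" if s: "0 \<le> s" "s \<le> t0" for s
  proof -
    have "EE u s \<le> EE u t0" using EE_mono(1)[OF T divc s] .
    then have "exp (EE u s) \<le> 2" using c2 by (meson exp_le_cancel_iff order_trans)
    then have "1/2 \<le> exp (- EE u s)" by (simp add: exp_minus field_simps)
    then have f1: "(h_lo - \<epsilon>) / 2 \<le> (h_lo - \<epsilon>) * exp (- EE u s)" using hle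
      by (metis mult_left_mono times_divide_eq_right mult.right_neutral diff_ge_0_iff_ge less_imp_le)
    have f2: "K * s \<le> K * t0" using K0 s by (simp add: mult_left_mono)
    have f3: "\<epsilon> * s \<le> \<epsilon> * T" using ep s t0 by (simp add: mult_left_mono)
    have f4: "(K + \<epsilon>) * s = K * s + \<epsilon> * s" by (simp add: algebra_simps)
    have "\<epsilon> * (1 + T) = \<epsilon> + \<epsilon> * T" by (simp add: algebra_simps)
    then have f7: "\<epsilon> + \<epsilon> * T = h_lo / 12" using ep(2) by simp
    have f5: "6 * (K * t0) \<le> h_lo" using c1 unfolding K_def by (simp only: mult.assoc)
    show ?thesis unfolding \<phi>_def by (rule lin1[OF f1 f2 f3 f4 f5 ep(1) f7 refl])
  qed
  have "\<forall>x. \<phi> t0 < h(x,t0)"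
  proof (rule ccontr)
    assume "\<not> (\<forall>x. \<phi> t0 < h(x,t0))"
    then obtain x' where fail0: "\<not> \<phi> t0 < h(x',t0)" by blast
    then have fail: "h(x',t0) \<le> \<phi> t0" by simp
    have Ec: "continuous_on {0..t0} (EE u)" using EE_cont[OF T divc] continuous_on_subset t0 by fastforce
    have pc: "continuous_on {0..t0} \<phi>" unfolding \<phi>_def using Ec by (intro continuous_intros)
    have i: "\<And>x. \<phi> 0 < h(x,0)" using hinit ep by (simp add: \<phi>_def EE_def) (smt (verit) hinit)
    obtain x t1 where tt: "x\<in>Omega" "0<t1" "t1\<le>t0" "h(x,t1) = \<phi> t1" "\<forall>y. \<phi> t1 \<le> h(y,t1)"
       "\<forall>s\<in>{0..<t1}. \<forall>y. \<phi> s < h(y,s)"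
      using touch[OF hc8 hper pc i _ fail] t0 by auto
    have t1T: "t1 \<in> {0..T}" using tt t0 by auto
    have cr: "dx1 h (x,t1) = 0 \<and> dx2 h (x,t1) = 0" using crit_min[OF hd] tt(4,5) by metis
    have eq: "dt h (x,t1) = S_h f \<omega> \<nu> (h (x,t1)) (A (x,t1)) - h (x,t1) * divu u (x,t1)"
      using h_crit8[of "(x,t1)"] cr t1T by auto
    define D where "D = Linf_divu u t1"
    have dphi: "(\<phi> has_real_derivative (h_lo - \<epsilon>) * (exp (- EE u t1) * (- D)) - (K + \<epsilon>)) (at t1)"
      unfolding \<phi>_def D_def using EE_deriv[OF T divc tt(2)] tt t0
      by (auto intro!: derivative_eq_intros)
    have le: "dt h (x,t1) \<le> (h_lo - \<epsilon>) * (exp (- EE u t1) * (- D)) - (K + \<epsilon>)"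
    proof -
      have b: "\<forall>s\<in>{0..<t1}. \<phi> s < h(x,s)" using tt(6) by blast
      show ?thesis by (rule touch_deriv[OF slicet[OF hd] dphi tt(2) tt(4)]) (use b in auto)
    qed
    have D0: "0 \<le> D" unfolding D_def using Linf_facts(3)[OF divc] .
    have dv: "\<bar>divu u (x,t1)\<bar> \<le> D" unfolding D_def using Linf_facts(2)[OF divc tt(1)] .
    have p0: "0 \<le> \<phi> t1" using bnd[of t1] tt hlo by auto
    have "\<phi> t1 * divu u (x,t1) \<le> \<phi> t1 * D" using p0 dv by (intro mult_left_mono) auto
    moreover have "- K \<le> S_h f \<omega> \<nu> (h (x,t1)) (A (x,t1))" using Sb8[OF t1T, where x=x] unfolding K_def by linarith
    moreover have "dt h (x,t1) = S_h f \<omega> \<nu> (h (x,t1)) (A (x,t1)) - \<phi> t1 * divu u (x,t1)"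
      using eq tt(4) by simp
    ultimately have "- K - \<phi> t1 * D \<le> dt h (x,t1)" by linarith
    moreover have "0 \<le> D * ((K + \<epsilon>) * t1)" using D0 K0 ep tt by simp
    ultimately show False using le ep unfolding \<phi>_def by (simp add: algebra_simps)
  qed
  moreover have "h_lo / 4 \<le> \<phi> t0" using bnd t0 by auto
  ultimately show ?thesis by (smt (verit))
qed

lemma h_upper:
  assumes t0: "t0 \<in> {0..T}" and c1: "6 * (\<bar>f_hi\<bar> + \<bar>f_lo\<bar>) * t0 \<le> h_lo" and c2: "exp (EE u t0) \<le> 2"
  shows "h(x',t0) \<le> 4 * h_hi"
proof -
  define K where "K = \<bar>f_hi\<bar> + \<bar>f_lo\<bar>"
  have K0: "0 \<le> K" by (simp add: K_def)
  define \<epsilon> where "\<epsilon> = h_lo / (12 * (1 + T))"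
  have ep: "0 < \<epsilon>" "\<epsilon> * (1 + T) = h_lo / 12" using hlo T by (auto simp: \<epsilon>_def field_simps)
  define \<psi> where "\<psi> s = exp (EE u s) * (h_hi + \<epsilon> + (K + \<epsilon>) * s)" for s :: real
  define \<phi> where "\<phi> s = - \<psi> s" for s :: real
  have hh: "h_lo \<le> h_hi" using hinit[of 0] by linarith
  have "\<forall>x. \<phi> t0 < - h(x,t0)"
  proof (rule ccontr)
    assume "\<not> (\<forall>x. \<phi> t0 < - h(x,t0))"
    then obtain x' where fail0: "\<not> \<phi> t0 < - h(x',t0)" by blast
    then have fail: "(\<lambda>z. - h z)(x',t0) \<le> \<phi> t0" by simp
    have Ec: "continuous_on {0..t0} (EE u)" using EE_cont[OF T divc] continuous_on_subset t0 by fastforce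
    have pc: "continuous_on {0..t0} \<phi>" unfolding \<phi>_def \<psi>_def using Ec by (intro continuous_intros)
    have i: "\<And>x. \<phi> 0 < (\<lambda>z. - h z)(x,0)" using hinit ep by (simp add: \<phi>_def \<psi>_def EE_def) (smt (verit) hinit)
    have mc: "continuous_on UNIV (\<lambda>z. - h z)" using hc8 by (intro continuous_intros)
    have mp: "periodic_x (\<lambda>z. - h z)" using hper by (simp add: periodic_x_def)
    obtain x t1 where tt: "x\<in>Omega" "0<t1" "t1\<le>t0" "- h(x,t1) = \<phi> t1" "\<forall>y. \<phi> t1 \<le> - h(y,t1)"
       "\<forall>s\<in>{0..<t1}. \<forall>y. \<phi> s < - h(y,s)"
      using touch[OF mc mp pc i _ fail] t0 by auto
    have t1T: "t1 \<in> {0..T}" using tt t0 by auto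
    have cr: "dx1 h (x,t1) = 0 \<and> dx2 h (x,t1) = 0" using crit_max[OF hd] tt(4,5) by (metis neg_le_iff_le)
    have eq: "dt h (x,t1) = S_h f \<omega> \<nu> (h (x,t1)) (A (x,t1)) - h (x,t1) * divu u (x,t1)"
      using h_crit8[of "(x,t1)"] cr t1T by auto
    define D where "D = Linf_divu u t1"
    have dphi: "(\<phi> has_real_derivative - (exp (EE u t1) * D * (h_hi + \<epsilon> + (K + \<epsilon>) * t1) + exp (EE u t1) * (K + \<epsilon>))) (at t1)"
      unfolding \<phi>_def \<psi>_def D_def using EE_deriv[OF T divc tt(2)] tt t0
      by (auto intro!: derivative_eq_intros simp: algebra_simps)
    have le: "- dt h (x,t1) \<le> - (exp (EE u t1) * D * (h_hi + \<epsilon> + (K + \<epsilon>) * t1) + exp (EE u t1) * (K + \<epsilon>))"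
    proof -
      have b: "\<forall>s\<in>{0..<t1}. \<phi> s < - h(x,s)" using tt(6) by blast
      show ?thesis by (rule touch_deriv[OF DERIV_minus[OF slicet[OF hd]] dphi tt(2)]) (use tt(4) b in auto)
    qed
    have D0: "0 \<le> D" unfolding D_def using Linf_facts(3)[OF divc] .
    have dv: "\<bar>divu u (x,t1)\<bar> \<le> D" unfolding D_def using Linf_facts(2)[OF divc tt(1)] .
    have E1: "1 \<le> exp (EE u t1)" using EE_mono(2)[OF T divc, of t1 t1] tt by simp
    have p0: "0 \<le> \<psi> t1" unfolding \<psi>_def using hh hlo ep K0 tt by (intro mult_nonneg_nonneg) auto
    have hx: "h(x,t1) = \<psi> t1" using tt(4) by (simp add: \<phi>_def)
    have "- (\<psi> t1 * divu u (x,t1)) \<le> \<psi> t1 * D" using p0 dv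
      by (smt (verit, best) abs_le_iff mult_left_mono mult_minus_right)
    moreover have "S_h f \<omega> \<nu> (h (x,t1)) (A (x,t1)) \<le> K" using Sb8[OF t1T, where x=x] unfolding K_def by linarith
    moreover have "dt h (x,t1) = S_h f \<omega> \<nu> (h (x,t1)) (A (x,t1)) - \<psi> t1 * divu u (x,t1)"
      using eq hx by simp
    ultimately have "dt h (x,t1) \<le> K + \<psi> t1 * D" by linarith
    moreover have "K + \<epsilon> \<le> exp (EE u t1) * (K + \<epsilon>)" using E1 K0 ep by simp
    ultimately show False using le ep unfolding \<psi>_def by (simp add: algebra_simps)
  qed
  then have "h(x',t0) < \<psi> t0" unfolding \<phi>_def by (metis neg_less_iff_less)
  moreover have "\<psi> t0 \<le> 4 * h_hi"
  proof -
    have "exp (EE u t0) \<le> 2" using c2 .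
    moreover have "0 \<le> h_hi + \<epsilon> + (K + \<epsilon>) * t0" using hh hlo ep K0 t0 by auto
    ultimately have g1: "\<psi> t0 \<le> 2 * (h_hi + \<epsilon> + (K + \<epsilon>) * t0)" unfolding \<psi>_def by (intro mult_right_mono) auto
    have g2: "\<epsilon> * t0 \<le> \<epsilon> * T" using ep t0 by (simp add: mult_left_mono)
    have g3: "(K + \<epsilon>) * t0 = K * t0 + \<epsilon> * t0" by (simp add: algebra_simps)
    have g4: "6 * (K * t0) \<le> h_lo" using c1 unfolding K_def by (simp only: mult.assoc)
    have "\<epsilon> * (1 + T) = \<epsilon> + \<epsilon> * T" by (simp add: algebra_simps)
    then have g5: "\<epsilon> + \<epsilon> * T = h_lo / 12" using ep(2) by simp
    show ?thesis by (rule lin2[OF g1 g3 g2 g4 g5 hh hlo])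
  qed
  ultimately show ?thesis by linarith
qed

end



lemma cont_slice: "continuous_on UNIV F \<Longrightarrow> continuous_on S (\<lambda>x. F (x,t))"
  by (rule continuous_on_compose2[of UNIV F]) (auto intro!: continuous_intros)

lemma Omega_eq: "Omega = cbox (0::real,0::real) (1,1)" by (simp add: Omega_def)

lemma int_dx1_zero:
  assumes gd: "\<And>z. g differentiable (at z)" and gc: "continuous_on UNIV (dx1 g)" and gp: "periodic_x g"
  shows "integral Omega (\<lambda>x. dx1 g (x,t)) = 0"
proof -
  have c: "continuous_on (cbox (0,0) (1,1)) (\<lambda>(x,y). dx1 g ((x,y),t))"
    using cont_slice[OF gc, of _ t] by (simp add: case_prod_unfold)
  have "integral Omega (\<lambda>x. dx1 g (x,t)) = integral (cbox 0 1) (\<lambda>x. integral (cbox 0 1) (\<lambda>y. dx1 g ((x,y),t)))"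
    unfolding Omega_eq by (subst integral_prod_continuous) (use c in \<open>auto simp: case_prod_unfold\<close>)
  also have "\<dots> = integral (cbox 0 1) (\<lambda>y. integral (cbox 0 1) (\<lambda>x. dx1 g ((x,y),t)))"
    by (rule integral_swap_continuous[OF c])
  also have "\<dots> = integral (cbox 0 1) (\<lambda>y::real. 0::real)"
  proof (rule Henstock_Kurzweil_Integration.integral_cong)
    fix y :: real
    have "((\<lambda>x. dx1 g ((x,y),t)) has_integral (g((1,y),t) - g((0,y),t))) {0..1}"
    proof (rule fundamental_theorem_of_calculus)
      fix x :: real assume "x \<in> {0..1}"
      show "((\<lambda>x. g((x,y),t)) has_vector_derivative dx1 g ((x,y),t)) (at x within {0..1})"
        using slice1[OF gd] by (simp add: has_real_derivative_iff_has_vector_derivative has_vector_derivative_at_within)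
    qed simp
    moreover have "g((1,y),t) = g((0,y),t)" using gp unfolding periodic_x_def by (metis add_0)
    ultimately show "integral (cbox 0 1) (\<lambda>x. dx1 g ((x,y),t)) = 0" by (simp add: cbox_interval integral_unique)
  qed
  finally show ?thesis by simp
qed

lemma int_dx2_zero:
  assumes gd: "\<And>z. g differentiable (at z)" and gc: "continuous_on UNIV (dx2 g)" and gp: "periodic_x g"
  shows "integral Omega (\<lambda>x. dx2 g (x,t)) = 0"
proof -
  have c: "continuous_on (cbox (0,0) (1,1)) (\<lambda>(x,y). dx2 g ((x,y),t))"
    using cont_slice[OF gc, of _ t] by (simp add: case_prod_unfold)
  have "integral Omega (\<lambda>x. dx2 g (x,t)) = integral (cbox 0 1) (\<lambda>x. integral (cbox 0 1) (\<lambda>y. dx2 g ((x,y),t)))"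
    unfolding Omega_eq by (subst integral_prod_continuous) (use c in \<open>auto simp: case_prod_unfold\<close>)
  also have "\<dots> = integral (cbox 0 1) (\<lambda>x::real. 0::real)"
  proof (rule Henstock_Kurzweil_Integration.integral_cong)
    fix x :: real
    have "((\<lambda>y. dx2 g ((x,y),t)) has_integral (g((x,1),t) - g((x,0),t))) {0..1}"
    proof (rule fundamental_theorem_of_calculus)
      fix y :: real assume "y \<in> {0..1}"
      show "((\<lambda>y. g((x,y),t)) has_vector_derivative dx2 g ((x,y),t)) (at y within {0..1})"
        using slice2[OF gd] by (simp add: has_real_derivative_iff_has_vector_derivative has_vector_derivative_at_within)
    qed simp
    moreover have "g((x,1),t) = g((x,0),t)" using gp unfolding periodic_x_def by (metis add_0)
    ultimately show "integral (cbox 0 1) (\<lambda>y. dx2 g ((x,y),t)) = 0" by (simp add: cbox_interval integral_unique)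
  qed
  finally show ?thesis by simp
qed




lemma content_Omega: "Henstock_Kurzweil_Integration.content Omega = 1"
  unfolding Omega_def by (simp add: content_cbox_cases Basis_prod_def inner_prod_def)

lemma measure_Omega: "measure lborel Omega = 1"
  unfolding Omega_def by (simp add: measure_lborel_cbox_eq Basis_prod_def inner_prod_def)

context
  fixes \<omega> \<nu> T f_lo f_hi :: real and f :: "real \<Rightarrow> real" and u :: "pt3 \<Rightarrow> real \<times> real"
    and h A :: "pt3 \<Rightarrow> real"
  assumes nu: "0 < \<nu>" and T: "0 < T"
    and u1d: "\<And>z. (\<lambda>w. fst (u w)) differentiable (at z)"
    and u2d: "\<And>z. (\<lambda>w. snd (u w)) differentiable (at z)"
    and u1c: "continuous_on UNIV (dx1 (\<lambda>w. fst (u w)))"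
    and u2c: "continuous_on UNIV (dx2 (\<lambda>w. snd (u w)))"
    and uper: "periodic_x u"
    and hd: "\<And>z. h differentiable (at z)"
    and hpc: "\<And>i. i < 3 \<Longrightarrow> continuous_on UNIV (pdiff i h)"
    and hper: "periodic_x h"
    and h_eq: "\<And>z. snd z \<in> {0..T} \<Longrightarrow> dt h z + divflux h u z = S_h f \<omega> \<nu> (h z) (A z)"
    and fbd: "\<And>y. f_lo \<le> f y \<and> f y \<le> f_hi"
    and A01: "\<And>x s. s \<in> {0..T} \<Longrightarrow> 0 \<le> A(x,s) \<and> A(x,s) \<le> 1"
begin

lemma dcont: "continuous_on UNIV (\<lambda>w. fst (u w))" "continuous_on UNIV (\<lambda>w. snd (u w))" "continuous_on UNIV h"
  using u1d u2d hd by (meson continuous_at_imp_continuous_on differentiable_imp_continuous_within)+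

lemma g1: "\<And>z. (\<lambda>w. h w * fst (u w)) differentiable (at z)" "continuous_on UNIV (dx1 (\<lambda>w. h w * fst (u w)))"
   "periodic_x (\<lambda>w. h w * fst (u w))"
proof -
  show "\<And>z. (\<lambda>w. h w * fst (u w)) differentiable (at z)" using hd u1d by (intro differentiable_mult)
  have "dx1 (\<lambda>w. h w * fst (u w)) = (\<lambda>z. dx1 h z * fst (u z) + h z * dx1 (\<lambda>w. fst (u w)) z)"
    using dx1_mult[OF hd u1d] by auto
  moreover have "continuous_on UNIV (\<lambda>z. dx1 h z * fst (u z) + h z * dx1 (\<lambda>w. fst (u w)) z)"
    by (intro continuous_on_add continuous_on_mult) (use hpc[of 0] dcont u1c in auto)
  ultimately show "continuous_on UNIV (dx1 (\<lambda>w. h w * fst (u w)))" by simp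
  show "periodic_x (\<lambda>w. h w * fst (u w))" using hper uper unfolding periodic_x_def by simp
qed

lemma g2: "\<And>z. (\<lambda>w. h w * snd (u w)) differentiable (at z)" "continuous_on UNIV (dx2 (\<lambda>w. h w * snd (u w)))"
   "periodic_x (\<lambda>w. h w * snd (u w))"
proof -
  show "\<And>z. (\<lambda>w. h w * snd (u w)) differentiable (at z)" using hd u2d by (intro differentiable_mult)
  have "dx2 (\<lambda>w. h w * snd (u w)) = (\<lambda>z. dx2 h z * snd (u z) + h z * dx2 (\<lambda>w. snd (u w)) z)"
    using dx2_mult[OF hd u2d] by auto
  moreover have "continuous_on UNIV (\<lambda>z. dx2 h z * snd (u z) + h z * dx2 (\<lambda>w. snd (u w)) z)"
    by (intro continuous_on_add continuous_on_mult) (use hpc[of 1] dcont u2c in auto)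
  ultimately show "continuous_on UNIV (dx2 (\<lambda>w. h w * snd (u w)))" by simp
  show "periodic_x (\<lambda>w. h w * snd (u w))" using hper uper unfolding periodic_x_def by simp
qed

lemma Mderiv: "((\<lambda>s. integral Omega (\<lambda>x. h(x,s))) has_real_derivative integral Omega (\<lambda>x. dt h (x,s))) (at s)"
proof -
  have "((\<lambda>s. integral (cbox (0,0) (1,1)) (\<lambda>x. h(x,s))) has_field_derivative
           integral (cbox (0,0) (1,1)) (\<lambda>x. dt h (x,s))) (at s within UNIV)"
  proof (rule leibniz_rule_field_derivative[where U=UNIV and f="\<lambda>s x. h(x,s)" and fx="\<lambda>s x. dt h (x,s)"])
    fix s :: real and x :: "real \<times> real"
    show "((\<lambda>s. h (x, s)) has_field_derivative dt h (x, s)) (at s within UNIV)" using slicet[OF hd] by simp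
  next
    fix s :: real
    show "(\<lambda>x. h (x, s)) integrable_on cbox (0, 0) (1, 1)"
      by (rule integrable_continuous[OF cont_slice[OF dcont(3)]])
  next
    show "continuous_on (UNIV \<times> cbox (0, 0) (1, 1)) (\<lambda>(s, x). dt h (x, s))"
      unfolding case_prod_unfold
      by (rule continuous_on_compose2[OF hpc[of 2]]) (auto intro!: continuous_intros)
  qed auto
  then show ?thesis by (simp add: Omega_def)
qed

lemma Mbound: assumes s: "s \<in> {0..T}"
  shows "\<bar>integral Omega (\<lambda>x. dt h (x,s))\<bar> \<le> \<bar>f_hi\<bar> + \<bar>f_lo\<bar>"
proof -
  let ?K = "\<bar>f_hi\<bar> + \<bar>f_lo\<bar>"
  have c1: "continuous_on UNIV (dt h)" using hpc[of 2] by simp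
  have cd: "continuous_on UNIV (divflux h u)"
  proof -
    have "divflux h u = (\<lambda>z. dx1 (\<lambda>w. h w * fst (u w)) z + dx2 (\<lambda>w. h w * snd (u w)) z)"
      by (auto simp: divflux_def)
    then show ?thesis using g1(2) g2(2) by (simp add: continuous_on_add)
  qed
  have i1: "(\<lambda>x. dt h (x,s)) integrable_on Omega" unfolding Omega_def by (rule integrable_continuous[OF cont_slice[OF c1]])
  have i2: "(\<lambda>x. divflux h u (x,s)) integrable_on Omega" unfolding Omega_def by (rule integrable_continuous[OF cont_slice[OF cd]])
  have i1a: "(\<lambda>x. dx1 (\<lambda>w. h w * fst (u w)) (x,s)) integrable_on Omega" unfolding Omega_def by (rule integrable_continuous[OF cont_slice[OF g1(2)]])
  have i2a: "(\<lambda>x. dx2 (\<lambda>w. h w * snd (u w)) (x,s)) integrable_on Omega" unfolding Omega_def by (rule integrable_continuous[OF cont_slice[OF g2(2)]])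
  have z: "integral Omega (\<lambda>x. divflux h u (x,s)) = 0"
    using integral_add[OF i1a i2a] int_dx1_zero[OF g1] int_dx2_zero[OF g2] by (simp add: divflux_def)
  have "integral Omega (\<lambda>x. dt h (x,s) + divflux h u (x,s)) = integral Omega (\<lambda>x. dt h (x,s))"
    using integral_add[OF i1 i2] z by simp
  moreover have i3: "(\<lambda>x. dt h (x,s) + divflux h u (x,s)) integrable_on Omega" using i1 i2 by (rule integrable_add)
  moreover have pb: "\<bar>dt h (x,s) + divflux h u (x,s)\<bar> \<le> ?K" for x
    using h_eq[of "(x,s)"] s Sh_bound[of "A(x,s)" \<nu> f_lo f f_hi] A01[of s x] nu fbd by auto
  have pb2: "- ?K \<le> dt h (x,s) + divflux h u (x,s)" "dt h (x,s) + divflux h u (x,s) \<le> ?K" for x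
    using pb[of x] by (simp_all add: abs_le_iff)
  have ic: "(\<lambda>x. c) integrable_on Omega" for c :: real unfolding Omega_def by (rule integrable_const)
  have "integral Omega (\<lambda>x. dt h (x,s) + divflux h u (x,s)) \<le> integral Omega (\<lambda>x. ?K)"
    by (rule integral_le[OF i3 ic]) (rule pb2(2))
  moreover have "integral Omega (\<lambda>x. - ?K) \<le> integral Omega (\<lambda>x. dt h (x,s) + divflux h u (x,s))"
    by (rule integral_le[OF ic i3]) (rule pb2(1))
  moreover have "integral Omega (\<lambda>x. ?K) = ?K" "integral Omega (\<lambda>x. - ?K) = - ?K"
    using content_Omega unfolding Omega_eq by simp_all
  ultimately show ?thesis by linarith
qed

lemma mass: assumes t: "t \<in> {0..T}"
  shows "\<bar>integral Omega (\<lambda>x. h(x,t)) - integral Omega (\<lambda>x. h(x,0))\<bar> \<le> (\<bar>f_hi\<bar> + \<bar>f_lo\<bar>) * t"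
proof (cases "t = 0")
  case True then show ?thesis by simp
next
  case False
  then have tp: "0 < t" using t by auto
  obtain z where z: "0 < z" "z < t" "integral Omega (\<lambda>x. h(x,t)) - integral Omega (\<lambda>x. h(x,0)) = (t - 0) * integral Omega (\<lambda>x. dt h (x,z))"
    using MVT2[OF tp, of "\<lambda>s. integral Omega (\<lambda>x. h(x,s))" "\<lambda>s. integral Omega (\<lambda>x. dt h (x,s))"] Mderiv by blast
  have "\<bar>integral Omega (\<lambda>x. dt h (x,z))\<bar> \<le> \<bar>f_hi\<bar> + \<bar>f_lo\<bar>" using Mbound[of z] z t by auto
  then show ?thesis using z tp by (simp add: abs_mult mult.commute mult_right_mono)
qed

end


theorem mainTheorem3:
  fixes \<omega> \<nu> T h0 h_lo h_hi f_lo f_hi :: real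
    and f :: "real \<Rightarrow> real"
    and u :: "pt3 \<Rightarrow> real \<times> real"
    and h A :: "pt3 \<Rightarrow> real"
    and h_in A_in :: "real \<times> real \<Rightarrow> real"
  assumes \<omega>: "0 < \<omega>" "\<omega> < 1" and \<nu>: "0 < \<nu>" "\<nu> < 1" and T: "0 < T"
    and h0: "0 < h0"
    and f_smooth: "smooth_real f" and f_bd: "\<And>y. f_lo \<le> f y \<and> f y \<le> f_hi"
    and u_smooth: "smooth3 (\<lambda>z. fst (u z))" "smooth3 (\<lambda>z. snd (u z))"
    and u_per: "periodic_x u"
    and h_reg: "C1_3 h" and A_reg: "C1_3 A"
    and h_per: "periodic_x h" and A_per: "periodic_x A"
    and h_eq: "\<And>z. snd z \<in> {0..T} \<Longrightarrow>
        dt h z + divflux h u z = S_h f \<omega> \<nu> (h z) (A z)"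
    and A_eq: "\<And>z. snd z \<in> {0..T} \<Longrightarrow>
        dt A z + divflux A u z
          = S_A f \<omega> \<nu> h0 (h z) (A z) + A z * divu u z * chi_A \<omega> (A z)"
    and h_init: "\<And>x. h (x, 0) = h_in x" and A_init: "\<And>x. A (x, 0) = A_in x"
    and h_in_bd: "0 < h_lo" "\<And>x. h_lo \<le> h_in x \<and> h_in x \<le> h_hi"
    and A_in_bd: "\<And>x. 0 \<le> A_in x \<and> A_in x \<le> 1"
  defines "K \<equiv> \<bar>f_hi\<bar> + \<bar>f_lo\<bar>"
  shows "(\<forall>x t. t \<in> {0..T} \<longrightarrow> 0 \<le> h (x, t))
    \<and> (\<forall>t \<in> {0..T}. 6 * K * t \<le> h_lo \<and> exp (integral {0..t} (Linf_divu u)) \<le> 2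
          \<longrightarrow> (\<forall>x. h_lo / 4 \<le> h (x, t) \<and> h (x, t) \<le> 4 * h_hi))
    \<and> (\<forall>t \<in> {0..T}. 6 * K * measure lborel Omega * t \<le> integral Omega h_in
          \<longrightarrow> integral Omega h_in / 2 \<le> integral Omega (\<lambda>x. h (x, t))
            \<and> integral Omega (\<lambda>x. h (x, t)) \<le> 2 * integral Omega h_in)"
  proof -
  have u1d: "\<And>z. (\<lambda>w. fst (u w)) differentiable (at z)"
  proof -
    fix z
    have "fold pdiff [] (\<lambda>z. fst (u z)) differentiable (at z)" using u_smooth(1) unfolding smooth3_def by blast
    then show "(\<lambda>w. fst (u w)) differentiable (at z)" by simp
  qed

  have u2d: "\<And>z. (\<lambda>w. snd (u w)) differentiable (at z)"
  proof -
    fix z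
    have "fold pdiff [] (\<lambda>z. snd (u z)) differentiable (at z)" using u_smooth(2) unfolding smooth3_def by blast
    then show "(\<lambda>w. snd (u w)) differentiable (at z)" by simp
  qed

  have u1dd: "\<And>z. dx1 (\<lambda>w. fst (u w)) differentiable (at z)"
  proof -
    fix z
    have "fold pdiff [0] (\<lambda>z. fst (u z)) differentiable (at z)" using u_smooth(1) unfolding smooth3_def by blast
    then show "dx1 (\<lambda>w. fst (u w)) differentiable (at z)" by simp
  qed

  have u2dd: "\<And>z. dx2 (\<lambda>w. snd (u w)) differentiable (at z)"
  proof -
    fix z
    have "fold pdiff [1] (\<lambda>z. snd (u z)) differentiable (at z)" using u_smooth(2) unfolding smooth3_def by blast
    then show "dx2 (\<lambda>w. snd (u w)) differentiable (at z)" by simp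
  qed

  have u1c: "continuous_on UNIV (dx1 (\<lambda>w. fst (u w)))"
    using u1dd by (meson continuous_at_imp_continuous_on differentiable_imp_continuous_within)
  have u2c: "continuous_on UNIV (dx2 (\<lambda>w. snd (u w)))"
    using u2dd by (meson continuous_at_imp_continuous_on differentiable_imp_continuous_within)
  have divc: "continuous_on UNIV (divu u)"
  proof -
    have "divu u = (\<lambda>z. dx1 (\<lambda>w. fst (u w)) z + dx2 (\<lambda>w. snd (u w)) z)" by (auto simp: divu_def)
    then show ?thesis using u1c u2c by (simp add: continuous_on_add)
  qed
  have hd: "\<And>z. h differentiable (at z)" using h_reg unfolding C1_3_def by blast
  have hpc: "\<And>i. i < 3 \<Longrightarrow> continuous_on UNIV (pdiff i h)" using h_reg unfolding C1_3_def by blast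
  have Ad: "\<And>z. A differentiable (at z)" using A_reg unfolding C1_3_def by blast
  have Ai0: "\<And>x. 0 \<le> A(x,0)" "\<And>x. A(x,0) \<le> 1" using A_init A_in_bd by auto
  have A01: "\<And>x s. s \<in> {0..T} \<Longrightarrow> 0 \<le> A(x,s) \<and> A(x,s) \<le> 1"
    using A_nonneg[OF \<omega>(1) \<nu>(1) T h0 u1d u2d divc hd Ad h_per A_per h_eq A_eq Ai0(1)]
          A_le1[OF \<omega>(1) \<nu>(1) T h0 u1d u2d divc hd Ad h_per A_per h_eq A_eq Ai0(2)] by blast
  have hi: "\<And>x. h_lo \<le> h(x,0) \<and> h(x,0) \<le> h_hi" using h_init h_in_bd by auto
  have hi0: "\<And>x. 0 < h(x,0)" using hi h_in_bd(1) by (meson less_le_trans)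
  have c1: "\<forall>x t. t \<in> {0..T} \<longrightarrow> 0 \<le> h (x, t)"
    using h_nonneg[OF \<omega>(1) \<nu>(1) T h0 u1d u2d divc hd Ad h_per A_per h_eq A_eq hi0] by blast
  have c2: "\<forall>t \<in> {0..T}. 6 * K * t \<le> h_lo \<and> exp (integral {0..t} (Linf_divu u)) \<le> 2
          \<longrightarrow> (\<forall>x. h_lo / 4 \<le> h (x, t) \<and> h (x, t) \<le> 4 * h_hi)"
  proof (intro ballI impI allI conjI)
    fix t x assume t: "t \<in> {0..T}" and c: "6 * K * t \<le> h_lo \<and> exp (integral {0..t} (Linf_divu u)) \<le> 2"
    have c': "6 * (\<bar>f_hi\<bar> + \<bar>f_lo\<bar>) * t \<le> h_lo" "exp (EE u t) \<le> 2"
      using c by (auto simp: K_def EE_def)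
    show "h_lo / 4 \<le> h (x, t)"
      by (rule h_lower[OF \<nu>(1) T u1d u2d divc hd h_per h_eq f_bd A01 h_in_bd(1) hi t c'])
    show "h (x, t) \<le> 4 * h_hi"
      by (rule h_upper[OF \<nu>(1) T u1d u2d divc hd h_per h_eq f_bd A01 h_in_bd(1) hi t c'])
  qed
  have c3: "\<forall>t \<in> {0..T}. 6 * K * measure lborel Omega * t \<le> integral Omega h_in
          \<longrightarrow> integral Omega h_in / 2 \<le> integral Omega (\<lambda>x. h (x, t))
            \<and> integral Omega (\<lambda>x. h (x, t)) \<le> 2 * integral Omega h_in"
  proof (intro ballI impI)
    fix t assume t: "t \<in> {0..T}" and c: "6 * K * measure lborel Omega * t \<le> integral Omega h_in"
    have m: "\<bar>integral Omega (\<lambda>x. h(x,t)) - integral Omega (\<lambda>x. h(x,0))\<bar> \<le> (\<bar>f_hi\<bar> + \<bar>f_lo\<bar>) * t"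
      by (rule mass[OF \<nu>(1) T u1d u2d u1c u2c u_per hd hpc h_per h_eq f_bd A01 t])
    have e: "integral Omega (\<lambda>x. h(x,0)) = integral Omega h_in" using h_init by simp
    have K0: "0 \<le> K * t" using t by (simp add: K_def)
    have c': "6 * (K * t) \<le> integral Omega h_in" using c measure_Omega by (simp add: algebra_simps)
    show "integral Omega h_in / 2 \<le> integral Omega (\<lambda>x. h (x, t))
            \<and> integral Omega (\<lambda>x. h (x, t)) \<le> 2 * integral Omega h_in"
      using m e K0 c' unfolding K_def[symmetric] by (auto simp: abs_le_iff)
  qed
  show ?thesis using c1 c2 c3 by blast
qed


end
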